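(* Let $0<s\leq t$ and $0<\alpha<\frac{st}{s+t}$. A randomized BSG-$(s,t)$ algorithm which on every input of length $n$ incurs an expected cost of at most $\alpha n$ must read at least $$b\geq K_{s/(s+t)}\!\left(\frac{\alpha}{t}\right)n$$ bits of advice.
   Context: BSG-$(s,t)$ (weighted binary string guessing) is the online problem with inputs $(n,x_1,\dots,x_n)$, $x_i\in\{0,1\}$: in round $i$ the algorithm knows $n,x_1,\dots,x_{i-1}$ and outputs $y_i\in\{0,1\}$; it pays $s$ if $x_i=0,y_i=1$, pays $t$ if $x_i=1,y_i=0$, and $0$ if $y_i=x_i$; $n$ is the length. Advice is read from an infinite tape prepared by an oracle knowing the input; a randomized algorithm with advice is a probability distribution over deterministic algorithms with advice. $K_y(x)=x\log_2(x/y)+(1-x)\log_2((1-x)/(1-y))$. *)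

theory Defs
  imports "HOL-Probability.Probability"
begin

text \<open>Bits are booleans (True = 1). A deterministic BSG algorithm with advice is a function
  that, given the advice tape, the length n and the already revealed prefix
  [x_1,...,x_(i-1)], outputs the guess y_i.\<close>
type_synonym bsg_alg = "(nat \<Rightarrow> bool) \<Rightarrow> nat \<Rightarrow> bool list \<Rightarrow> bool"

definition bsg_cost :: "real \<Rightarrow> real \<Rightarrow> bsg_alg \<Rightarrow> (nat \<Rightarrow> bool) \<Rightarrow> bool list \<Rightarrow> real" where
  "bsg_cost s t D phi x =
     (\<Sum>i<length x. (let y = D phi (length x) (take i x) in
        (if \<not> x ! i \<and> y then s else if x ! i \<and> \<not> y then t else 0)))"

definition reads_at_most :: "nat \<Rightarrow> nat \<Rightarrow> bsg_alg \<Rightarrow> bool" where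
  "reads_at_most b n D \<longleftrightarrow>
     (\<forall>phi phi'. (\<forall>i<b. phi i = phi' i) \<longrightarrow>
        (\<forall>xs. length xs < n \<longrightarrow> D phi n xs = D phi' n xs))"

definition K :: "real \<Rightarrow> real \<Rightarrow> real" where
  "K y x = x * log 2 (x / y) + (1 - x) * log 2 ((1 - x) / (1 - y))"

end

theory Submission
  imports Defs
begin

definition LL :: "nat \<Rightarrow> bool list set" where "LL m = {xs. length xs = m}"

lemma finite_LL: "finite (LL m)"
  using finite_lists_length_eq[of "UNIV::bool set" m] by (simp add: LL_def)

lemma card_LL: "card (LL m) = 2 ^ m"
  using card_lists_length_eq[of "UNIV::bool set" m] by (simp add: LL_def)

lemma LL_Suc: "LL (Suc m) = (\<lambda>x. True#x) ` LL m \<union> (\<lambda>x. False#x) ` LL m"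
  unfolding LL_def by (auto simp: length_Suc_conv)

lemma sum_LL_Suc: "(\<Sum>x\<in>LL (Suc m). F x) = (\<Sum>x\<in>LL m. F (True#x)) + (\<Sum>x\<in>LL m. F (False#x))"
proof -
  have "(\<Sum>x\<in>LL (Suc m). F x) = (\<Sum>x\<in>(\<lambda>x. True#x) ` LL m. F x) + (\<Sum>x\<in>(\<lambda>x. False#x) ` LL m. F x)"
    unfolding LL_Suc by (rule sum.union_disjoint) (auto simp: finite_LL)
  also have "\<dots> = (\<Sum>x\<in>LL m. F (True#x)) + (\<Sum>x\<in>LL m. F (False#x))"
    by (subst (1 2) sum.reindex) (auto simp: inj_on_def)
  finally show ?thesis .
qed

primrec wt :: "real \<Rightarrow> bool list \<Rightarrow> real" where
  "wt q [] = 1" | "wt q (b#l) = (if b then q else 1 - q) * wt q l"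

lemma wt_nonneg: "0 \<le> q \<Longrightarrow> q \<le> 1 \<Longrightarrow> 0 \<le> wt q l"
  by (induct l) auto

lemma sum_wt: "(\<Sum>x\<in>LL m. wt q x) = 1"
proof (induct m)
  case 0 then show ?case by (simp add: LL_def)
next
  case (Suc m)
  have "(\<Sum>x\<in>LL (Suc m). wt q x) = q * (\<Sum>x\<in>LL m. wt q x) + (1-q) * (\<Sum>x\<in>LL m. wt q x)"
    by (simp add: sum_LL_Suc sum_distrib_left)
  then show ?case using Suc by simp
qed

definition cst :: "real \<Rightarrow> real \<Rightarrow> bool \<Rightarrow> bool \<Rightarrow> real" where
  "cst s t xi y = (if \<not> xi \<and> y then s else if xi \<and> \<not> y then t else 0)"

lemma key_bound:
  fixes f :: "real \<Rightarrow> real"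
  assumes fadd: "\<And>a b. f (a + b) = f a * f b" and f0: "f 0 = 1" and fpos: "\<And>a. 0 \<le> f a"
    and q: "0 \<le> q" "q \<le> 1"
    and br1: "(1 - q) * f s + q \<le> M" and br2: "(1 - q) + q * f t \<le> M"
  shows "(\<Sum>x\<in>LL m. wt q x * f (\<Sum>i<m. cst s t (x!i) (G (take i x)))) \<le> M ^ m"
proof (induct m arbitrary: G)
  case 0 then show ?case by (simp add: LL_def f0)
next
  case (Suc m)
  have M0: "0 \<le> M" using br2 q fpos[of t] by (smt (verit) mult_nonneg_nonneg)
  have e: "\<And>b x. (\<Sum>i<Suc m. cst s t ((b#x)!i) (G (take i (b#x))))
     = cst s t b (G []) + (\<Sum>i<m. cst s t (x!i) ((\<lambda>l. G (b#l)) (take i x)))"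
    by (simp only: sum.lessThan_Suc_shift) simp
  have "(\<Sum>x\<in>LL (Suc m). wt q x * f (\<Sum>i<Suc m. cst s t (x!i) (G (take i x))))
      = (if True then q else 1 - q) * f (cst s t True (G [])) * (\<Sum>x\<in>LL m. wt q x * f (\<Sum>i<m. cst s t (x!i) ((\<lambda>l. G (True#l)) (take i x))))
      + (if False then q else 1 - q) * f (cst s t False (G [])) * (\<Sum>x\<in>LL m. wt q x * f (\<Sum>i<m. cst s t (x!i) ((\<lambda>l. G (False#l)) (take i x))))"
    unfolding sum_LL_Suc e fadd by (simp add: sum_distrib_left algebra_simps)
  also have "\<dots> \<le> (if True then q else 1 - q) * f (cst s t True (G [])) * M ^ m
      + (if False then q else 1 - q) * f (cst s t False (G [])) * M ^ m"
    using q fpos by (intro add_mono mult_left_mono Suc) auto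
  also have "\<dots> \<le> M * M ^ m"
  proof (cases "G []")
    case True
    then have "(if True then q else 1 - q) * f (cst s t True (G [])) * M ^ m
      + (if False then q else 1 - q) * f (cst s t False (G [])) * M ^ m = (q + (1-q) * f s) * M^m"
      by (simp add: cst_def f0 algebra_simps)
    also have "\<dots> \<le> M * M^m" using br1 M0 by (intro mult_right_mono) auto
    finally show ?thesis .
  next
    case False
    then have "(if True then q else 1 - q) * f (cst s t True (G [])) * M ^ m
      + (if False then q else 1 - q) * f (cst s t False (G [])) * M ^ m = ((1-q) + q * f t) * M^m"
      by (simp add: cst_def f0 algebra_simps)
    also have "\<dots> \<le> M * M^m" using br2 M0 by (intro mult_right_mono) auto
    finally show ?thesis .
  qed
  finally show ?case by simp
qed


lemma int_bdd:
  fixes g :: "'a \<Rightarrow> real"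
  assumes "\<And>D. D \<in> set_pmf A \<Longrightarrow> \<bar>g D\<bar> \<le> B"
  shows "integrable (measure_pmf A) g"
  by (rule measure_pmf.integrable_const_bound[where B=B]) (auto intro!: AE_pmfI assms)

lemma cost_eq: "length x = n \<Longrightarrow> bsg_cost s t D phi x = (\<Sum>i<n. cst s t (x!i) (D phi n (take i x)))"
  by (simp add: bsg_cost_def cst_def Let_def)

lemma cost_bounds:
  assumes "0 \<le> s" "s \<le> t"
  shows "0 \<le> bsg_cost s t D phi x" "bsg_cost s t D phi x \<le> real (length x) * t"
proof -
  have h: "\<And>i. 0 \<le> cst s t (x!i) (D phi (length x) (take i x)) \<and> cst s t (x!i) (D phi (length x) (take i x)) \<le> t"
    using assms by (simp add: cst_def)
  show "0 \<le> bsg_cost s t D phi x" unfolding cost_eq[OF refl] using h by (intro sum_nonneg) auto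
  have "bsg_cost s t D phi x \<le> (\<Sum>i<length x. t)" unfolding cost_eq[OF refl] using h by (intro sum_mono) auto
  then show "bsg_cost s t D phi x \<le> real (length x) * t" by simp
qed

definition adv :: "nat \<Rightarrow> bool list \<Rightarrow> nat \<Rightarrow> bool" where
  "adv b a = (\<lambda>i. if i < b then a!i else False)"

lemma cost_adv:
  assumes "reads_at_most b n D" "length x = n"
  shows "bsg_cost s t D phi x = bsg_cost s t D (adv b (map phi [0..<b])) x"
proof -
  have "\<And>i. i < n \<Longrightarrow> D phi n (take i x) = D (adv b (map phi [0..<b])) n (take i x)"
  proof -
    fix i assume i: "i < n"
    have "\<forall>j<b. phi j = adv b (map phi [0..<b]) j" by (simp add: adv_def)
    moreover have "length (take i x) < n" using i assms(2) by simp
    ultimately show "D phi n (take i x) = D (adv b (map phi [0..<b])) n (take i x)"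
      using assms(1) unfolding reads_at_most_def by blast
  qed
  then show ?thesis using assms(2) by (simp add: cost_eq)
qed

lemma tangent:
  fixes v t c c0 :: real
  assumes "0 < v" "0 < t"
  shows "v powr (c0 / t) * (1 + (c - c0) / t * ln v) \<le> v powr (c / t)"
proof -
  have "v powr (c0 / t) * (1 + (c - c0) / t * ln v) \<le> v powr (c0 / t) * exp ((c - c0) / t * ln v)"
    using exp_ge_add_one_self[of "(c - c0) / t * ln v"] by (intro mult_left_mono) (auto simp: add.commute)
  also have "\<dots> = exp (c0 / t * ln v + (c - c0) / t * ln v)"
    using assms by (simp add: powr_def exp_add mult.commute)
  also have "c0 / t * ln v + (c - c0) / t * ln v = c / t * ln v" using assms by (simp add: field_simps)
  finally show ?thesis using assms by (simp add: powr_def mult.commute)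
qed


theorem theorem13:
  fixes s t \<alpha> :: real and n b :: nat and A :: "bsg_alg pmf"
  assumes "0 < s" and "s \<le> t" and "0 < \<alpha>" and "\<alpha> < s * t / (s + t)"
    and "\<forall>D \<in> set_pmf A. reads_at_most b n D"
    and "\<forall>x. length x = n \<longrightarrow>
           (\<exists>phi. measure_pmf.expectation A (\<lambda>D. bsg_cost s t D phi x) \<le> \<alpha> * real n)"
  shows "real b \<ge> K (s / (s + t)) (\<alpha> / t) * real n"
proof -
  define q where "q = s / (s+t)"
  define xx where "xx = \<alpha> / t"
  define v where "v = xx * (1-q) / (q * (1-xx))"
  define f where "f = (\<lambda>c::real. v powr (c / t))"
  define M where "M = (1-q) + q * v"
  have t0: "0 < t" using assms by linarith
  have st0: "0 < s + t" using assms by linarith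
  have q0: "0 < q" "q < 1" using assms t0 by (auto simp: q_def field_simps)
  have a1: "\<alpha> * (s + t) < s * t" using assms(4) st0 by (simp add: field_simps)
  have xq: "0 < xx" "xx < q" using assms t0 st0 a1 by (auto simp: xx_def q_def field_simps)
  have v0: "0 < v" using q0 xq by (simp add: v_def)
  have v1: "v < 1" using q0 xq by (simp add: v_def field_simps)
  have M_eq: "M = (1-q) / (1-xx)" using q0 xq by (simp add: M_def v_def field_simps)
  have fadd: "\<And>a c. f (a + c) = f a * f c" by (simp add: f_def add_divide_distrib powr_add)
  have f0: "f 0 = 1" using v0 by (simp add: f_def)
  have fpos: "\<And>a. 0 \<le> f a" by (simp add: f_def)
  have fle1: "\<And>a. 0 \<le> a \<Longrightarrow> f a \<le> 1" unfolding f_def using v0 v1 t0 by (intro powr_le1) auto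
  have hq: "(1-q)*(s/t) = q" using t0 st0 by (simp add: q_def field_simps)
  have br1: "(1 - q) * f s + q \<le> M"
  proof -
    have "v powr (s/t) * 1 powr (1 - s/t) \<le> (s/t) * v + (1 - s/t) * 1"
      using assms t0 v0 by (intro Youngs_inequality_0) auto
    then have "f s \<le> (s/t) * v + (1 - s/t)" by (simp add: f_def)
    then have "(1 - q) * f s \<le> (1-q) * ((s/t) * v + (1 - s/t))" using q0 by (intro mult_left_mono) auto
    also have "\<dots> = (1-q)*(s/t) * v + (1-q) - (1-q)*(s/t)" by (simp add: algebra_simps)
    finally show ?thesis unfolding hq M_def by simp
  qed
  have br2: "(1 - q) + q * f t \<le> M" using v0 t0 by (simp add: f_def M_def)
  define g where "g = (\<lambda>a x. measure_pmf.expectation A (\<lambda>D. f (bsg_cost s t D (adv b a) x)))"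
  have intf: "\<And>psi x. integrable (measure_pmf A) (\<lambda>D. f (bsg_cost s t D psi x))"
    by (rule int_bdd[where B=1]) (use fpos fle1 cost_bounds assms(1,2) in \<open>auto simp: abs_le_iff\<close>)
  have P: "f (\<alpha> * n) \<le> (\<Sum>a\<in>LL b. g a x)" if x: "x \<in> LL n" for x
  proof -
    have lx: "length x = n" using x by (simp add: LL_def)
    obtain phi where phi: "measure_pmf.expectation A (\<lambda>D. bsg_cost s t D phi x) \<le> \<alpha> * real n"
      using assms(6) lx by blast
    define C where "C = (\<lambda>D. bsg_cost s t D phi x)"
    have intC: "integrable (measure_pmf A) C"
      unfolding C_def by (rule int_bdd[where B="real (length x) * t"])
        (use cost_bounds assms(1,2) in \<open>auto simp: abs_le_iff\<close>)
    define c0 where "c0 = \<alpha> * n"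
    define \<beta> where "\<beta> = f c0 * ln v / t"
    have beta: "\<beta> \<le> 0" using v0 v1 t0 fpos[of c0] unfolding \<beta>_def
      by (simp add: divide_nonpos_pos mult_nonneg_nonpos)
    have pw: "f c0 * (1 - c0 / t * ln v) + \<beta> * C D \<le> f (C D)" for D
    proof -
      have "f c0 * (1 - c0 / t * ln v) + \<beta> * C D = v powr (c0 / t) * (1 + (C D - c0) / t * ln v)"
        using t0 by (simp add: f_def \<beta>_def field_simps)
      also have "\<dots> \<le> f (C D)" unfolding f_def by (rule tangent[OF v0 t0])
      finally show ?thesis .
    qed
    have "f c0 = f c0 * (1 - c0 / t * ln v) + \<beta> * c0"
      using t0 by (simp add: \<beta>_def field_simps)
    also have "\<dots> \<le> f c0 * (1 - c0 / t * ln v) + \<beta> * measure_pmf.expectation A C"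
      using phi beta unfolding C_def c0_def by (intro add_left_mono mult_left_mono_neg) auto
    also have "\<dots> = measure_pmf.expectation A (\<lambda>D. f c0 * (1 - c0 / t * ln v) + \<beta> * C D)"
      using intC by simp
    also have "\<dots> \<le> measure_pmf.expectation A (\<lambda>D. f (C D))"
      using intC intf pw unfolding C_def by (intro integral_mono) auto
    also have "\<dots> = g (map phi [0..<b]) x"
    proof -
      have "AE D in measure_pmf A. f (C D) = f (bsg_cost s t D (adv b (map phi [0..<b])) x)"
      proof (rule AE_pmfI)
        fix D assume "D \<in> set_pmf A"
        then have rd: "reads_at_most b n D" using assms(5) by blast
        then show "f (C D) = f (bsg_cost s t D (adv b (map phi [0..<b])) x)"
          unfolding C_def by (simp only: cost_adv[OF rd lx, where phi=phi and s=s and t=t])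
      qed
      then show ?thesis unfolding g_def by (rule integral_cong_AE[rotated 2]) simp_all
    qed
    also have "\<dots> \<le> (\<Sum>a\<in>LL b. g a x)"
      by (rule member_le_sum) (auto simp: LL_def g_def intro!: integral_nonneg_AE fpos finite_LL[unfolded LL_def])
    finally show ?thesis unfolding c0_def .
  qed
  have "f (\<alpha> * n) = (\<Sum>x\<in>LL n. wt q x * f (\<alpha> * n))"
    by (simp add: sum_distrib_right[symmetric] sum_wt)
  also have "\<dots> \<le> (\<Sum>x\<in>LL n. wt q x * (\<Sum>a\<in>LL b. g a x))"
    using P wt_nonneg q0 by (intro sum_mono mult_left_mono) auto
  also have "\<dots> = (\<Sum>a\<in>LL b. \<Sum>x\<in>LL n. wt q x * g a x)"
    by (simp add: sum_distrib_left sum.swap[of _ "LL n"])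
  also have "\<dots> = (\<Sum>a\<in>LL b. measure_pmf.expectation A (\<lambda>D. \<Sum>x\<in>LL n. wt q x * f (bsg_cost s t D (adv b a) x)))"
  proof (rule sum.cong[OF refl])
    fix a
    have "measure_pmf.expectation A (\<lambda>D. \<Sum>x\<in>LL n. wt q x * f (bsg_cost s t D (adv b a) x))
        = (\<Sum>x\<in>LL n. measure_pmf.expectation A (\<lambda>D. wt q x * f (bsg_cost s t D (adv b a) x)))"
      by (rule Bochner_Integration.integral_sum[where f="\<lambda>x D. wt q x * f (bsg_cost s t D (adv b a) x)"]) (auto intro!: intf)
    also have "\<dots> = (\<Sum>x\<in>LL n. wt q x * g a x)" by (simp add: g_def)
    finally show "(\<Sum>x\<in>LL n. wt q x * g a x) = measure_pmf.expectation A (\<lambda>D. \<Sum>x\<in>LL n. wt q x * f (bsg_cost s t D (adv b a) x))" by simp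
  qed
  also have "\<dots> \<le> (\<Sum>a\<in>LL b. M ^ n)"
  proof (intro sum_mono measure_pmf.integral_le_const AE_pmfI)
    fix a show "integrable (measure_pmf A) (\<lambda>D. \<Sum>x\<in>LL n. wt q x * f (bsg_cost s t D (adv b a) x))"
      using intf by auto
  next
    fix a D
    have "(\<Sum>x\<in>LL n. wt q x * f (bsg_cost s t D (adv b a) x))
       = (\<Sum>x\<in>LL n. wt q x * f (\<Sum>i<n. cst s t (x!i) (D (adv b a) n (take i x))))"
      by (intro sum.cong refl) (simp add: LL_def cost_eq)
    also have "\<dots> \<le> M ^ n" using q0 by (intro key_bound fadd f0 fpos br1 br2) auto
    finally show "(\<Sum>x\<in>LL n. wt q x * f (bsg_cost s t D (adv b a) x)) \<le> M ^ n" .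
  qed
  also have "\<dots> = 2 ^ b * M ^ n" by (simp add: card_LL)
  finally have main: "f (\<alpha> * n) \<le> 2 ^ b * M ^ n" .
  have M0: "0 < M" using q0 xq by (simp add: M_eq)
  have "ln (f (\<alpha> * n)) \<le> ln (2 ^ b * M ^ n)"
    using main v0 by (subst ln_le_cancel_iff) (auto simp: f_def M0)
  then have L: "xx * n * ln v \<le> b * ln 2 + n * ln M"
    using v0 M0 t0 by (simp add: f_def ln_powr ln_mult ln_realpow xx_def)
  have lnv: "ln v = ln xx + ln (1-q) - ln q - ln (1-xx)"
    using q0 xq by (simp add: v_def ln_div ln_mult)
  have lnM: "ln M = ln (1-q) - ln (1-xx)" using q0 xq by (simp add: M_eq ln_div)
  have Kq: "K q xx * ln 2 = xx * ln v - ln M"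
    using q0 xq unfolding K_def log_def lnv lnM by (simp add: ln_div field_simps)
  have "K q xx * n * ln 2 = n * (xx * ln v - ln M)"
    using Kq by (metis mult.commute mult.left_commute)
  also have "\<dots> \<le> b * ln 2"
    using L by (simp add: algebra_simps)
  finally have "K q xx * n * ln 2 \<le> b * ln 2" .
  then have "K q xx * n \<le> b"
    using mult_le_cancel_right_pos[of "ln (2::real)" "K q xx * n" "real b"] by simp
  then show ?thesis by (simp add: q_def xx_def)
qed

end
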